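(* Let $a_0,a_1,a_2$ be real numbers and let $(F(n,k))_{n\ge 0,\,k\in\mathbb{Z}}$ be defined by $F(0,0)=1$, $F(n,k)=0$ whenever $k<0$ or $k>n$, and \[ F(n,k)=F(n-1,k-1)+(a_2n+a_1k+a_0)\,F(n-1,k)\qquad(n\ge1). \] Then for all integers $0\le k\le n$, \[ F(n,k)=\sum_{1\le p_1<p_2<\cdots<p_{n-k}\le n}\ \prod_{i=1}^{n-k}\big((a_2+a_1)p_i-a_1 i+a_0\big). \]
   Context: The sum runs over all strictly increasing sequences of $n-k$ integers in $\{1,\dots,n\}$; an empty product equals $1$. *)

theory Defs
  imports Complex_Main
begin

fun F :: "real \<Rightarrow> real \<Rightarrow> real \<Rightarrow> nat \<Rightarrow> int \<Rightarrow> real" where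
  "F a0 a1 a2 0 k = (if k = 0 then 1 else 0)"
| "F a0 a1 a2 (Suc n) k =
     (if k < 0 \<or> k > int (Suc n) then 0
      else F a0 a1 a2 n (k - 1)
           + (a2 * real (Suc n) + a1 * real_of_int k + a0) * F a0 a1 a2 n k)"

text \<open>Strictly increasing sequences p_1 < ... < p_m with values in {1..n},
  encoded as functions on nat that are 0 outside the index range {1..m}.\<close>
definition incseqs :: "nat \<Rightarrow> nat \<Rightarrow> (nat \<Rightarrow> nat) set" where
  "incseqs m n = {p. (\<forall>i\<in>{1..m}. p i \<in> {1..n})
                    \<and> (\<forall>i j. 1 \<le> i \<longrightarrow> i < j \<longrightarrow> j \<le> m \<longrightarrow> p i < p j)
                    \<and> (\<forall>i. i \<notin> {1..m} \<longrightarrow> p i = 0)}"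

end

theory Submission
  imports Defs
begin

lemma incseqs_finite: "finite (incseqs m n)"
proof -
  have "incseqs m n \<subseteq> {f. \<forall>x. (x \<in> {1..m} \<longrightarrow> f x \<in> {1..n}) \<and> (x \<notin> {1..m} \<longrightarrow> f x = 0)}"
    unfolding incseqs_def by auto
  thus ?thesis by (rule finite_subset) (rule finite_set_of_finite_funs, auto)
qed

lemma incseqs_0: "incseqs 0 n = {\<lambda>_. 0}"
  unfolding incseqs_def by auto

lemma incseqs_Suc_0: "incseqs (Suc j) 0 = {}"
  unfolding incseqs_def by auto

lemma incseqs_mono:
  assumes "p \<in> incseqs m n" "1 \<le> i" "i \<le> j" "j \<le> m"
  shows "p i \<le> p j"
proof (cases "i = j")
  case False
  then have "i < j" using assms by simp
  then show ?thesis using assms unfolding incseqs_def by (simp add: less_imp_le)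
qed simp

lemma incseqsD:
  assumes "p \<in> incseqs m n"
  shows "\<And>i. 1 \<le> i \<Longrightarrow> i \<le> m \<Longrightarrow> 1 \<le> p i \<and> p i \<le> n"
    and "\<And>i j. 1 \<le> i \<Longrightarrow> i < j \<Longrightarrow> j \<le> m \<Longrightarrow> p i < p j"
    and "\<And>i. \<not> (1 \<le> i \<and> i \<le> m) \<Longrightarrow> p i = 0"
  using assms unfolding incseqs_def by auto

lemma incseqsI:
  assumes "\<And>i. 1 \<le> i \<Longrightarrow> i \<le> m \<Longrightarrow> 1 \<le> p i \<and> p i \<le> n"
    and "\<And>i j. 1 \<le> i \<Longrightarrow> i < j \<Longrightarrow> j \<le> m \<Longrightarrow> p i < p j"
    and "\<And>i. \<not> (1 \<le> i \<and> i \<le> m) \<Longrightarrow> p i = 0"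
  shows "p \<in> incseqs m n"
  using assms unfolding incseqs_def by auto

lemma incseqs_split:
  "incseqs (Suc j) (Suc n) = incseqs (Suc j) n \<union> (\<lambda>p. p(Suc j := Suc n)) ` incseqs j n"
proof (intro equalityI subsetI)
  fix p assume p: "p \<in> incseqs (Suc j) (Suc n)"
  note P = incseqsD[OF p]
  show "p \<in> incseqs (Suc j) n \<union> (\<lambda>p. p(Suc j := Suc n)) ` incseqs j n"
  proof (cases "p (Suc j) \<le> n")
    case True
    have "p \<in> incseqs (Suc j) n"
    proof (rule incseqsI)
      fix i assume i: "1 \<le> i" "i \<le> Suc j"
      have "p i \<le> p (Suc j)" using incseqs_mono[OF p, of i "Suc j"] i by auto
      thus "1 \<le> p i \<and> p i \<le> n" using P(1)[OF i] True by linarith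
    qed (use P in auto)
    thus ?thesis by blast
  next
    case False
    then have pj: "p (Suc j) = Suc n" using P(1)[of "Suc j"] by simp
    define q where "q = p(Suc j := 0)"
    have "q \<in> incseqs j n"
    proof (rule incseqsI)
      fix i assume i: "1 \<le> i" "i \<le> j"
      have "p i < p (Suc j)" using P(2)[of i "Suc j"] i by simp
      moreover have "p i \<ge> 1" using P(1)[of i] i by simp
      ultimately show "1 \<le> q i \<and> q i \<le> n" using pj i q_def by simp
    next
      fix i k assume "1 \<le> i" "i < k" "k \<le> j"
      thus "q i < q k" using P(2)[of i k] unfolding q_def by simp
    next
      fix i assume "\<not> (1 \<le> i \<and> i \<le> j)"
      thus "q i = 0" using P(3)[of i] unfolding q_def by auto
    qed
    moreover have "p = q(Suc j := Suc n)" using pj unfolding q_def by (simp add: fun_upd_idem)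
    ultimately show ?thesis by blast
  qed
next
  fix p assume "p \<in> incseqs (Suc j) n \<union> (\<lambda>p. p(Suc j := Suc n)) ` incseqs j n"
  then show "p \<in> incseqs (Suc j) (Suc n)"
  proof
    assume p: "p \<in> incseqs (Suc j) n"
    note P = incseqsD[OF p]
    show ?thesis by (rule incseqsI) (use P in \<open>auto simp: le_SucI\<close>)
  next
    assume "p \<in> (\<lambda>p. p(Suc j := Suc n)) ` incseqs j n"
    then obtain q where q: "q \<in> incseqs j n" and pq: "p = q(Suc j := Suc n)" by auto
    note Q = incseqsD[OF q]
    show ?thesis
    proof (rule incseqsI)
      fix i assume i: "1 \<le> i" "i \<le> Suc j"
      show "1 \<le> p i \<and> p i \<le> Suc n"
      proof (cases "i = Suc j")
        case True thus ?thesis using pq by simp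
      next
        case False thus ?thesis using pq Q(1)[of i] i by simp
      qed
    next
      fix i k assume a: "1 \<le> i" "i < k" "k \<le> Suc j"
      show "p i < p k"
      proof (cases "k = Suc j")
        case True
        then have "q i \<le> n" using Q(1)[of i] a by simp
        thus ?thesis using pq True a by simp
      next
        case False thus ?thesis using Q(2)[of i k] pq a by simp
      qed
    next
      fix i assume "\<not> (1 \<le> i \<and> i \<le> Suc j)"
      thus "p i = 0" using Q(3)[of i] pq by auto
    qed
  qed
qed

lemma incseqs_ge: "p \<in> incseqs m n \<Longrightarrow> 1 \<le> i \<Longrightarrow> i \<le> m \<Longrightarrow> i \<le> p i"
proof (induction i)
  case 0 thus ?case by simp
next
  case (Suc i)
  show ?case
  proof (cases "i = 0")
    case True thus ?thesis using incseqsD(1)[OF Suc.prems(1), of 1] Suc.prems by simp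
  next
    case False
    then have "i \<le> p i" using Suc by simp
    moreover have "p i < p (Suc i)" using incseqsD(2)[OF Suc.prems(1), of i "Suc i"] False Suc.prems by simp
    ultimately show ?thesis by simp
  qed
qed

lemma incseqs_Suc_empty: "incseqs (Suc n) n = {}"
proof (rule ccontr)
  assume "incseqs (Suc n) n \<noteq> {}"
  then obtain p where p: "p \<in> incseqs (Suc n) n" by blast
  have "Suc n \<le> p (Suc n)" using incseqs_ge[OF p, of "Suc n"] by simp
  moreover have "p (Suc n) \<le> n" using incseqsD(1)[OF p, of "Suc n"] by simp
  ultimately show False by simp
qed

definition G :: "real \<Rightarrow> real \<Rightarrow> real \<Rightarrow> nat \<Rightarrow> nat \<Rightarrow> real" where
  "G a0 a1 a2 m n = (\<Sum>p\<in>incseqs m n. \<Prod>i=1..m. (a2 + a1) * real (p i) - a1 * real i + a0)"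

lemma G_0: "G a0 a1 a2 0 n = 1"
  unfolding G_def incseqs_0 by simp

lemma G_Suc_0: "G a0 a1 a2 (Suc j) 0 = 0"
  unfolding G_def incseqs_Suc_0 by simp

lemma G_rec: "G a0 a1 a2 (Suc j) (Suc n) = G a0 a1 a2 (Suc j) n
   + ((a2 + a1) * real (Suc n) - a1 * real (Suc j) + a0) * G a0 a1 a2 j n"
proof -
  let ?f = "\<lambda>m p. \<Prod>i=1..m. (a2 + a1) * real (p i) - a1 * real i + a0"
  let ?h = "\<lambda>p. p(Suc j := Suc n)"
  have disj: "incseqs (Suc j) n \<inter> ?h ` incseqs j n = {}"
  proof (rule ccontr)
    assume "incseqs (Suc j) n \<inter> ?h ` incseqs j n \<noteq> {}"
    then obtain q where "?h q \<in> incseqs (Suc j) n" by blast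
    from incseqsD(1)[OF this, of "Suc j"] show False by simp
  qed
  have inj: "inj_on ?h (incseqs j n)"
  proof (rule inj_onI)
    fix p q assume "p \<in> incseqs j n" "q \<in> incseqs j n" "?h p = ?h q"
    then have "(?h p)(Suc j := 0) = (?h q)(Suc j := 0)" by simp
    moreover have "(?h p)(Suc j := 0) = p" "(?h q)(Suc j := 0) = q"
      using incseqsD(3)[OF \<open>p \<in> incseqs j n\<close>, of "Suc j"] incseqsD(3)[OF \<open>q \<in> incseqs j n\<close>, of "Suc j"]
      by (auto simp: fun_upd_idem)
    ultimately show "p = q" by simp
  qed
  have "G a0 a1 a2 (Suc j) (Suc n) = sum (?f (Suc j)) (incseqs (Suc j) n) + sum (?f (Suc j)) (?h ` incseqs j n)"
    unfolding G_def incseqs_split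
    by (rule sum.union_disjoint) (auto simp: incseqs_finite disj)
  also have "sum (?f (Suc j)) (?h ` incseqs j n) = sum (?f (Suc j) \<circ> ?h) (incseqs j n)"
    by (rule sum.reindex[OF inj])
  also have "\<dots> = sum (\<lambda>p. ((a2 + a1) * real (Suc n) - a1 * real (Suc j) + a0) * ?f j p) (incseqs j n)"
  proof (rule sum.cong[OF refl])
    fix p assume "p \<in> incseqs j n"
    have "(?f (Suc j) \<circ> ?h) p = ?f j (?h p) * ((a2 + a1) * real (Suc n) - a1 * real (Suc j) + a0)"
      by (simp add: prod.nat_ivl_Suc')
    also have "?f j (?h p) = ?f j p" by (rule prod.cong) auto
    finally show "(?f (Suc j) \<circ> ?h) p = ((a2 + a1) * real (Suc n) - a1 * real (Suc j) + a0) * ?f j p"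
      by simp
  qed
  finally show ?thesis unfolding G_def by (simp add: sum_distrib_left)
qed

lemma F_out: "k < 0 \<or> k > int n \<Longrightarrow> F a0 a1 a2 n k = 0"
  by (cases n) auto

lemma F_step: "0 \<le> k \<Longrightarrow> k \<le> int (Suc n) \<Longrightarrow>
  F a0 a1 a2 (Suc n) k = F a0 a1 a2 n (k - 1) + (a2 * real (Suc n) + a1 * real_of_int k + a0) * F a0 a1 a2 n k"
  by simp

lemma coef: "k \<le> n \<Longrightarrow> (a2 + a1) * real (Suc n) - a1 * real (Suc (n - k)) + a0 = a2 * real (Suc n) + a1 * real k + a0"
proof -
  assume kn: "k \<le> n"
  have h: "real (Suc n) - real (Suc (n - k)) = real k" using kn by (simp add: of_nat_diff)
  have "a1 * real (Suc n) - a1 * real (Suc (n - k)) = a1 * real k"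
    using h by (metis right_diff_distrib)
  moreover have "(a2 + a1) * real (Suc n) = a2 * real (Suc n) + a1 * real (Suc n)" by (rule distrib_right)
  ultimately show ?thesis by linarith
qed

lemma F_G: "k \<le> n \<Longrightarrow> F a0 a1 a2 n (int k) = G a0 a1 a2 (n - k) n"
proof (induction n arbitrary: k)
  case 0 thus ?case by (simp add: G_0)
next
  case (Suc n)
  show ?case
  proof (cases k)
    case 0
    have "F a0 a1 a2 (Suc n) 0 = F a0 a1 a2 n (0 - 1) + (a2 * real (Suc n) + a1 * real_of_int 0 + a0) * F a0 a1 a2 n 0"
      by (rule F_step) auto
    also have "F a0 a1 a2 n (0 - 1) = 0" by (rule F_out) simp
    also have "F a0 a1 a2 n 0 = G a0 a1 a2 n n" using Suc.IH[of 0] by simp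
    finally have e: "F a0 a1 a2 (Suc n) 0 = (a2 * real (Suc n) + a0) * G a0 a1 a2 n n" by simp
    have g: "G a0 a1 a2 (Suc n) n = 0"
      unfolding G_def incseqs_Suc_empty by simp
    have r: "G a0 a1 a2 (Suc n) (Suc n) = (a2 * real (Suc n) + a0) * G a0 a1 a2 n n"
      using G_rec[of a0 a1 a2 n n] g coef[of 0 n a2 a1 a0] by simp
    show ?thesis using 0 e r by simp
  next
    case (Suc k')
    have kn: "k' \<le> n" using Suc.prems Suc by simp
    have "F a0 a1 a2 (Suc n) (int k) = F a0 a1 a2 n (int k - 1) + (a2 * real (Suc n) + a1 * real_of_int (int k) + a0) * F a0 a1 a2 n (int k)"
      by (rule F_step) (use Suc.prems in auto)
    also have "int k - 1 = int k'" using Suc by simp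
    also have "F a0 a1 a2 n (int k') = G a0 a1 a2 (n - k') n" using Suc.IH kn by simp
    finally have e: "F a0 a1 a2 (Suc n) (int k) = G a0 a1 a2 (n - k') n + (a2 * real (Suc n) + a1 * real k + a0) * F a0 a1 a2 n (int k)" by simp
    show ?thesis
    proof (cases "k = Suc n")
      case True
      then have "F a0 a1 a2 n (int k) = 0" by (intro F_out) simp
      thus ?thesis using e True Suc by (simp add: G_0)
    next
      case False
      then have kn2: "k \<le> n" using Suc.prems by simp
      have IH2: "F a0 a1 a2 n (int k) = G a0 a1 a2 (n - k) n" using Suc.IH kn2 by simp
      have nk: "n - k' = Suc (n - k)" "Suc n - k = Suc (n - k)" using Suc kn2 by auto
      show ?thesis using e IH2 G_rec[of a0 a1 a2 "n - k" n] coef[OF kn2, of a2 a1 a0] unfolding nk by simp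
    qed
  qed
qed

theorem mainTheorem2:
  fixes a0 a1 a2 :: real and n k :: nat
  assumes "k \<le> n"
  shows "F a0 a1 a2 n (int k) =
    (\<Sum>p\<in>incseqs (n - k) n.
       \<Prod>i=1..n - k. (a2 + a1) * real (p i) - a1 * real i + a0)"
  using F_G[OF assms] unfolding G_def .

end
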